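(* Let $E=\{E_{\bar a}:\bar a\in[\lambda]^{<\omega}\}$ be a system of $\kappa$-complete ultrafilters, $E_{\bar a}$ on ${}^{\bar a}\kappa$, satisfying coherence. The following are equivalent: (1) $E$ is well-founded. (2) Łoś' Theorem holds for $\mathbb{L}_{\kappa,\omega}(Q^{WF})$-formulas: for every $\bar a\in[\lambda]^{<\omega}$, every family of $\tau$-structures $\{M_s:s\in{}^{\bar a}\kappa\}$, every $\phi(x_1,\dots,x_n)\in\mathbb{L}_{\kappa,\omega}(Q^{WF})(\tau)$ and all $[\bar b_1,f_1]_E,\dots,[\bar b_n,f_n]_E\in\prod M_s/E$, we have $\prod M_s/E\models\phi([\bar b_1,f_1]_E,\dots,[\bar b_n,f_n]_E)$ iff $\{s\in{}^{\bigcup_i\bar b_i}\kappa: M_{s\restriction\bar a}\models\phi(f_1(s\restriction\bar b_1),\dots,f_n(s\restriction\bar b_n))\}\in E_{\bigcup_i\bar b_i}$.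
   Context: Coherence: for $\bar a\subseteq\bar b$, $X\in E_{\bar a}$ iff $\{s\in{}^{\bar b}\kappa: s\restriction\bar a\in X\}\in E_{\bar b}$. Well-foundedness: for any countably many $\bar a_n\in[\lambda]^{<\omega}$ and $X_n\in E_{\bar a_n}$ there is $h:\bigcup_n\bar a_n\to\kappa$ with $h\restriction\bar a_n\in X_n$ for all $n$. Extender product: given $\bar a$ and $\tau$-structures $M_s$ ($s\in{}^{\bar a}\kappa$), $\prod M_s/E$ is the direct limit of the ultraproducts $\prod_{s\in{}^{\bar b}\kappa}M_{s\restriction\bar a}/E_{\bar b}$ ($\bar a\subseteq\bar b\in[\lambda]^{<\omega}$) under the maps induced by restriction; its elements are classes $[\bar b,f]_E$ with $\bar a\subseteq\bar b$ and $f$ a function on ${}^{\bar b}\kappa$ with $f(s)\in M_{s\restriction\bar a}$, where $[\bar b,f]_E=[\bar c,g]_E$ iff $\{s\in{}^{\bar b\cup\bar c}\kappa:f(s\restriction\bar b)=g(s\restriction\bar c)\}\in E_{\bar b\cup\bar c}$ (relations defined similarly). $\mathbb{L}_{\kappa,\omega}(Q^{WF})$ is $\mathbb{L}_{\kappa,\omega}$ with the quantifier $Q^{WF}$: $Q^{WF}xy\,\phi(x,y,\bar z)$ holds iff there is no sequence $(x_n)_{n<\omega}$ with $\phi(x_{n+1},x_n,\bar z)$ for all $n$. *)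

theory Defs
  imports Main
begin

datatype 'f tm = Var nat | Fn 'f "'f tm list"

text \<open>Infinitary conjunctions are indexed by subsets of the type 'k
  (whose cardinality is kappa); well-formedness (wff) demands fewer than kappa conjuncts.\<close>
datatype ('f, 'r, 'k) fm =
    Rel 'r "'f tm list"
  | Eq "'f tm" "'f tm"
  | Neg "('f, 'r, 'k) fm"
  | BigAnd "'k set" "'k \<Rightarrow> ('f, 'r, 'k) fm"
  | Ex nat "('f, 'r, 'k) fm"
  | QWF nat nat "('f, 'r, 'k) fm"

primrec fvt :: "'f tm \<Rightarrow> nat set" where
  "fvt (Var x) = {x}"
| "fvt (Fn f ts) = \<Union> (set (map fvt ts))"

primrec fv :: "('f, 'r, 'k) fm \<Rightarrow> nat set" where
  "fv (Rel r ts) = \<Union> (set (map fvt ts))"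
| "fv (Eq t u) = fvt t \<union> fvt u"
| "fv (Neg \<phi>) = fv \<phi>"
| "fv (BigAnd I F) = (\<Union>i\<in>I. fv (F i))"
| "fv (Ex x \<phi>) = fv \<phi> - {x}"
| "fv (QWF x y \<phi>) = fv \<phi> - {x, y}"

primrec wff :: "('f, 'r, 'k) fm \<Rightarrow> bool" where
  "wff (Rel r ts) = True"
| "wff (Eq t u) = True"
| "wff (Neg \<phi>) = wff \<phi>"
| "wff (BigAnd I F) = ((card_of I, card_of (UNIV :: 'k set)) \<in> ordLess \<and> (\<forall>i\<in>I. wff (F i)))"
| "wff (Ex x \<phi>) = wff \<phi>"
| "wff (QWF x y \<phi>) = wff \<phi>"

datatype ('f, 'r, 'm) struct =
  Struct (univ: "'m set") (fnI: "'f \<Rightarrow> 'm list \<Rightarrow> 'm") (relI: "'r \<Rightarrow> 'm list \<Rightarrow> bool")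

definition is_struct :: "('f, 'r, 'm) struct \<Rightarrow> bool" where
  "is_struct M \<longleftrightarrow> univ M \<noteq> {} \<and> (\<forall>f xs. set xs \<subseteq> univ M \<longrightarrow> fnI M f xs \<in> univ M)"

primrec evalt :: "('f, 'r, 'm) struct \<Rightarrow> (nat \<Rightarrow> 'm) \<Rightarrow> 'f tm \<Rightarrow> 'm" where
  "evalt M v (Var x) = v x"
| "evalt M v (Fn f ts) = fnI M f (map (evalt M v) ts)"

primrec sat :: "('f, 'r, 'm) struct \<Rightarrow> (nat \<Rightarrow> 'm) \<Rightarrow> ('f, 'r, 'k) fm \<Rightarrow> bool" where
  "sat M v (Rel r ts) = relI M r (map (evalt M v) ts)"
| "sat M v (Eq t u) = (evalt M v t = evalt M v u)"
| "sat M v (Neg \<phi>) = (\<not> sat M v \<phi>)"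
| "sat M v (BigAnd I F) = (\<forall>i\<in>I. sat M v (F i))"
| "sat M v (Ex x \<phi>) = (\<exists>a\<in>univ M. sat M (v(x := a)) \<phi>)"
| "sat M v (QWF x y \<phi>) =
     (\<not> (\<exists>g. (\<forall>j. g j \<in> univ M) \<and> (\<forall>j. sat M (v(x := g (Suc j), y := g j)) \<phi>)))"

text \<open>lambda is the type 'l, kappa is the type 'k. An element s of ^{a}kappa is a partial
  map with domain exactly a.\<close>
definition seqs :: "'l set \<Rightarrow> ('l \<rightharpoonup> 'k) set" where
  "seqs a = {s. dom s = a}"

definition ultrafilter_on :: "'a set \<Rightarrow> 'a set set \<Rightarrow> bool" where
  "ultrafilter_on X U \<longleftrightarrow>
     U \<subseteq> Pow X \<and> X \<in> U \<and> {} \<notin> U \<and>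
     (\<forall>A B. A \<in> U \<and> A \<subseteq> B \<and> B \<subseteq> X \<longrightarrow> B \<in> U) \<and>
     (\<forall>A B. A \<in> U \<and> B \<in> U \<longrightarrow> A \<inter> B \<in> U) \<and>
     (\<forall>A. A \<subseteq> X \<longrightarrow> A \<in> U \<or> X - A \<in> U)"

definition kappa_complete :: "('l \<rightharpoonup> 'k) set set \<Rightarrow> bool" where
  "kappa_complete U \<longleftrightarrow>
     (\<forall>F. F \<subseteq> U \<and> F \<noteq> {} \<and> (card_of F, card_of (UNIV :: 'k set)) \<in> ordLess \<longrightarrow> \<Inter>F \<in> U)"

definition extender_system :: "('l set \<Rightarrow> ('l \<rightharpoonup> 'k) set set) \<Rightarrow> bool" where
  "extender_system E \<longleftrightarrow>
     (\<forall>a. finite a \<longrightarrow> ultrafilter_on (seqs a) (E a) \<and> kappa_complete (E a))"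

definition coherent :: "('l set \<Rightarrow> ('l \<rightharpoonup> 'k) set set) \<Rightarrow> bool" where
  "coherent E \<longleftrightarrow>
     (\<forall>a b X. finite b \<and> a \<subseteq> b \<and> X \<subseteq> seqs a \<longrightarrow>
        (X \<in> E a \<longleftrightarrow> {s \<in> seqs b. s |` a \<in> X} \<in> E b))"

definition E_wellfounded :: "('l set \<Rightarrow> ('l \<rightharpoonup> 'k) set set) \<Rightarrow> bool" where
  "E_wellfounded E \<longleftrightarrow>
     (\<forall>(a :: nat \<Rightarrow> 'l set) X. (\<forall>n. finite (a n) \<and> X n \<in> E (a n)) \<longrightarrow>
        (\<exists>h. dom h = (\<Union>n. a n) \<and> (\<forall>n. h |` a n \<in> X n)))"

text \<open>Representatives [b,f]: b finite with a \<subseteq> b, f s \<in> M_{s|a} for s \<in> ^{b}kappa.\<close>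
definition valid_rep ::
  "('l set \<Rightarrow> ('l \<rightharpoonup> 'k) set set) \<Rightarrow> 'l set \<Rightarrow> (('l \<rightharpoonup> 'k) \<Rightarrow> ('f, 'r, 'm) struct)
     \<Rightarrow> 'l set \<times> (('l \<rightharpoonup> 'k) \<Rightarrow> 'm) \<Rightarrow> bool" where
  "valid_rep E a M p \<longleftrightarrow>
     finite (fst p) \<and> a \<subseteq> fst p \<and> (\<forall>s\<in>seqs (fst p). snd p s \<in> univ (M (s |` a)))"

definition eqv ::
  "('l set \<Rightarrow> ('l \<rightharpoonup> 'k) set set) \<Rightarrow> 'l set \<times> (('l \<rightharpoonup> 'k) \<Rightarrow> 'm)
     \<Rightarrow> 'l set \<times> (('l \<rightharpoonup> 'k) \<Rightarrow> 'm) \<Rightarrow> bool" where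
  "eqv E p q \<longleftrightarrow>
     {s \<in> seqs (fst p \<union> fst q). snd p (s |` fst p) = snd q (s |` fst q)} \<in> E (fst p \<union> fst q)"

definition cls ::
  "('l set \<Rightarrow> ('l \<rightharpoonup> 'k) set set) \<Rightarrow> 'l set \<Rightarrow> (('l \<rightharpoonup> 'k) \<Rightarrow> ('f, 'r, 'm) struct)
     \<Rightarrow> 'l set \<times> (('l \<rightharpoonup> 'k) \<Rightarrow> 'm) \<Rightarrow> ('l set \<times> (('l \<rightharpoonup> 'k) \<Rightarrow> 'm)) set" where
  "cls E a M p = {q. valid_rep E a M q \<and> eqv E p q}"

definition rep :: "'a set \<Rightarrow> 'a" where
  "rep x = (SOME p. p \<in> x)"

definition prod_univ ::
  "('l set \<Rightarrow> ('l \<rightharpoonup> 'k) set set) \<Rightarrow> 'l set \<Rightarrow> (('l \<rightharpoonup> 'k) \<Rightarrow> ('f, 'r, 'm) struct)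
     \<Rightarrow> ('l set \<times> (('l \<rightharpoonup> 'k) \<Rightarrow> 'm)) set set" where
  "prod_univ E a M = {cls E a M p | p. valid_rep E a M p}"

definition supp :: "'l set \<Rightarrow> ('l set \<times> (('l \<rightharpoonup> 'k) \<Rightarrow> 'm)) set list \<Rightarrow> 'l set" where
  "supp a xs = a \<union> \<Union> (set (map (\<lambda>x. fst (rep x)) xs))"

definition evrep :: "('l \<rightharpoonup> 'k) \<Rightarrow> ('l set \<times> (('l \<rightharpoonup> 'k) \<Rightarrow> 'm)) set \<Rightarrow> 'm" where
  "evrep s x = snd (rep x) (s |` fst (rep x))"

definition ext_prod ::
  "('l set \<Rightarrow> ('l \<rightharpoonup> 'k) set set) \<Rightarrow> 'l set \<Rightarrow> (('l \<rightharpoonup> 'k) \<Rightarrow> ('f, 'r, 'm) struct)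
     \<Rightarrow> ('f, 'r, ('l set \<times> (('l \<rightharpoonup> 'k) \<Rightarrow> 'm)) set) struct" where
  "ext_prod E a M =
     Struct (prod_univ E a M)
       (\<lambda>f xs. cls E a M (supp a xs, \<lambda>s. fnI (M (s |` a)) f (map (evrep s) xs)))
       (\<lambda>r xs. {s \<in> seqs (supp a xs). relI (M (s |` a)) r (map (evrep s) xs)} \<in> E (supp a xs))"

definition los ::
  "('l set \<Rightarrow> ('l \<rightharpoonup> 'k) set set) \<Rightarrow> 'l set \<Rightarrow> (('l \<rightharpoonup> 'k) \<Rightarrow> ('f, 'r, 'm) struct) \<Rightarrow> bool" where
  "los E a M \<longleftrightarrow>
     (\<forall>(\<phi> :: ('f, 'r, 'k) fm) ps.
        wff \<phi> \<and> fv \<phi> \<subseteq> {..<length ps} \<and> (\<forall>p\<in>set ps. valid_rep E a M p) \<longrightarrow>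
        (sat (ext_prod E a M) (\<lambda>i. cls E a M (ps ! i)) \<phi> \<longleftrightarrow>
         {s \<in> seqs (a \<union> \<Union> (set (map fst ps))).
            sat (M (s |` a)) (\<lambda>i. snd (ps ! i) (s |` fst (ps ! i))) \<phi>}
           \<in> E (a \<union> \<Union> (set (map fst ps)))))"

end

theory Submission
  imports Defs
begin

lemma seqs_restrict: "s \<in> seqs d \<Longrightarrow> c \<subseteq> d \<Longrightarrow> s |` c \<in> seqs c"
  by (auto simp: seqs_def)

lemma restrict_self: "s \<in> seqs c \<Longrightarrow> s |` c = s"
  by (rule ext) (auto simp: seqs_def restrict_map_def dom_def)

locale ectx =
  fixes E :: "'l set \<Rightarrow> ('l \<rightharpoonup> 'k) set set"
  assumes ext: "extender_system E" and coh: "coherent E"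
begin

lemma uf: "finite c \<Longrightarrow> ultrafilter_on (seqs c) (E c)"
  using ext by (simp add: extender_system_def)

lemma uf_p1: assumes "finite c" shows "E c \<subseteq> Pow (seqs c)"
  using uf[OF assms] unfolding ultrafilter_on_def by (elim conjE)
lemma uf_p2: assumes "finite c" shows "seqs c \<in> E c"
  using uf[OF assms] unfolding ultrafilter_on_def by (elim conjE)
lemma uf_p3: assumes "finite c" shows "{} \<notin> E c"
  using uf[OF assms] unfolding ultrafilter_on_def by (elim conjE)
lemma uf_p4: assumes "finite c" shows "\<forall>A B. A \<in> E c \<and> A \<subseteq> B \<and> B \<subseteq> seqs c \<longrightarrow> B \<in> E c"
  using uf[OF assms] unfolding ultrafilter_on_def by (elim conjE)
lemma uf_p5: assumes "finite c" shows "\<forall>A B. A \<in> E c \<and> B \<in> E c \<longrightarrow> A \<inter> B \<in> E c"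
  using uf[OF assms] unfolding ultrafilter_on_def by (elim conjE)
lemma uf_p6: assumes "finite c" shows "\<forall>A. A \<subseteq> seqs c \<longrightarrow> A \<in> E c \<or> seqs c - A \<in> E c"
  using uf[OF assms] unfolding ultrafilter_on_def by (elim conjE)
lemmas uf_parts = uf_p1 uf_p2 uf_p3 uf_p4 uf_p5 uf_p6

lemma E_sub: assumes "finite c" "X \<in> E c" shows "X \<subseteq> seqs c"
  using uf_p1[OF assms(1)] assms(2) by auto

lemma E_top: "finite c \<Longrightarrow> seqs c \<in> E c"
  by (rule uf_p2)

lemma E_empty: "finite c \<Longrightarrow> {} \<notin> E c"
  by (rule uf_p3)

lemma E_up: assumes "finite c" "X \<in> E c" "X \<subseteq> Y" "Y \<subseteq> seqs c" shows "Y \<in> E c"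
proof -
  have "X \<in> E c \<and> X \<subseteq> Y \<and> Y \<subseteq> seqs c \<longrightarrow> Y \<in> E c"
    using uf_p4[OF assms(1)] by (elim allE)
  then show ?thesis using assms by simp
qed

lemma E_int: assumes "finite c" "X \<in> E c" "Y \<in> E c" shows "X \<inter> Y \<in> E c"
proof -
  have "X \<in> E c \<and> Y \<in> E c \<longrightarrow> X \<inter> Y \<in> E c"
    using uf_p5[OF assms(1)] by (elim allE)
  then show ?thesis using assms by simp
qed

lemma E_dich: "finite c \<Longrightarrow> X \<subseteq> seqs c \<Longrightarrow> X \<in> E c \<or> seqs c - X \<in> E c"
proof -
  assume c: "finite c" and X: "X \<subseteq> seqs c"
  have "X \<subseteq> seqs c \<longrightarrow> X \<in> E c \<or> seqs c - X \<in> E c"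
    using uf_p6[OF c] by (elim allE)
  then show ?thesis using X by simp
qed

lemma E_compl: "finite c \<Longrightarrow> X \<subseteq> seqs c \<Longrightarrow> X \<notin> E c \<longleftrightarrow> seqs c - X \<in> E c"
proof -
  assume c: "finite c" and X: "X \<subseteq> seqs c"
  show ?thesis
  proof
    assume "X \<notin> E c" then show "seqs c - X \<in> E c" using E_dich[OF c X] by blast
  next
    assume "seqs c - X \<in> E c"
    show "X \<notin> E c"
    proof
      assume "X \<in> E c"
      then have "X \<inter> (seqs c - X) \<in> E c" using E_int[OF c] \<open>seqs c - X \<in> E c\<close> by blast
      then show False using E_empty[OF c] by simp
    qed
  qed
qed

lemma E_nonempty: "finite c \<Longrightarrow> X \<in> E c \<Longrightarrow> \<exists>s. s \<in> X"
proof -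
  assume "finite c" "X \<in> E c"
  then have "X \<noteq> {}" using E_empty by metis
  then show ?thesis by blast
qed

lemma coh_iff: "finite b \<Longrightarrow> a \<subseteq> b \<Longrightarrow> X \<subseteq> seqs a \<Longrightarrow>
    X \<in> E a \<longleftrightarrow> {s \<in> seqs b. s |` a \<in> X} \<in> E b"
  using coh unfolding coherent_def by blast

lemma lift_pred:
  assumes "finite d" "c \<subseteq> d"
  shows "{s\<in>seqs c. Q s} \<in> E c \<longleftrightarrow> {s\<in>seqs d. Q (s |` c)} \<in> E d"
proof -
  have e: "{s\<in>seqs d. s |` c \<in> {s\<in>seqs c. Q s}} = {s\<in>seqs d. Q (s |` c)}"
    using seqs_restrict[OF _ assms(2)] by blast
  have "{s\<in>seqs c. Q s} \<in> E c \<longleftrightarrow> {s\<in>seqs d. s |` c \<in> {s\<in>seqs c. Q s}} \<in> E d"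
    by (rule coh_iff[OF assms]) blast
  then show ?thesis unfolding e .
qed

lemma E_inter_iff: "finite d \<Longrightarrow> A \<in> E d \<Longrightarrow> X \<subseteq> seqs d \<Longrightarrow> X \<in> E d \<longleftrightarrow> X \<inter> A \<in> E d"
proof
  assume "finite d" "A \<in> E d" "X \<subseteq> seqs d" "X \<in> E d"
  then show "X \<inter> A \<in> E d" using E_int by blast
next
  assume d: "finite d" "A \<in> E d" "X \<subseteq> seqs d" "X \<inter> A \<in> E d"
  show "X \<in> E d" by (rule E_up[OF d(1) d(4) _ d(3)]) blast
qed

lemma transfer:
  assumes d: "finite d" and c1: "c1 \<subseteq> d" and c2: "c2 \<subseteq> d" and A: "A \<in> E d"
    and eq: "\<And>s. s \<in> A \<Longrightarrow> Q1 (s |` c1) \<longleftrightarrow> Q2 (s |` c2)"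
  shows "{s\<in>seqs c1. Q1 s} \<in> E c1 \<longleftrightarrow> {s\<in>seqs c2. Q2 s} \<in> E c2"
proof -
  have e: "{s\<in>seqs d. Q1 (s |` c1)} \<inter> A = {s\<in>seqs d. Q2 (s |` c2)} \<inter> A"
    using eq by blast
  have "{s\<in>seqs c1. Q1 s} \<in> E c1 \<longleftrightarrow> {s\<in>seqs d. Q1 (s |` c1)} \<inter> A \<in> E d"
    using lift_pred[OF d c1, of Q1] E_inter_iff[OF d A, of "{s\<in>seqs d. Q1 (s |` c1)}"] by simp
  also have "\<dots> \<longleftrightarrow> {s\<in>seqs d. Q2 (s |` c2)} \<inter> A \<in> E d" unfolding e ..
  also have "\<dots> \<longleftrightarrow> {s\<in>seqs c2. Q2 s} \<in> E c2"
    using lift_pred[OF d c2, of Q2] E_inter_iff[OF d A, of "{s\<in>seqs d. Q2 (s |` c2)}"] by simp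
  finally show ?thesis .
qed

lemma restrict_sub: "b \<subseteq> c \<Longrightarrow> s |` c |` b = s |` b"
  by (simp add: Int_absorb1)

lemma eqv_refl: "finite (fst p) \<Longrightarrow> eqv E p p"
  unfolding eqv_def using E_top[of "fst p"] by simp

lemma eqv_sym: "eqv E p q \<Longrightarrow> eqv E q p"
proof -
  assume "eqv E p q"
  moreover have "{s \<in> seqs (fst q \<union> fst p). snd q (s |` fst q) = snd p (s |` fst p)}
     = {s \<in> seqs (fst p \<union> fst q). snd p (s |` fst p) = snd q (s |` fst q)}"
    by (auto simp: Un_commute)
  ultimately show ?thesis unfolding eqv_def by (metis Un_commute)
qed

lemma eqv_lift:
  assumes "eqv E p q" "finite d" "fst p \<union> fst q \<subseteq> d"
  shows "{s \<in> seqs d. snd p (s |` fst p) = snd q (s |` fst q)} \<in> E d"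
proof -
  have "{s \<in> seqs d. snd p (s |` (fst p \<union> fst q) |` fst p) = snd q (s |` (fst p \<union> fst q) |` fst q)} \<in> E d"
    using assms(1) lift_pred[OF assms(2,3), of "\<lambda>s. snd p (s |` fst p) = snd q (s |` fst q)"]
    unfolding eqv_def by simp
  moreover have "fst p \<subseteq> fst p \<union> fst q" "fst q \<subseteq> fst p \<union> fst q" by auto
  ultimately show ?thesis by (simp only: restrict_sub)
qed

lemma eqv_lower:
  assumes "finite d" "fst p \<union> fst q \<subseteq> d"
    and "{s \<in> seqs d. snd p (s |` fst p) = snd q (s |` fst q)} \<in> E d"
  shows "eqv E p q"
proof -
  have "fst p \<subseteq> fst p \<union> fst q" "fst q \<subseteq> fst p \<union> fst q" by auto
  then have "{s \<in> seqs d. snd p (s |` (fst p \<union> fst q) |` fst p) = snd q (s |` (fst p \<union> fst q) |` fst q)} \<in> E d"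
    using assms(3) by (simp only: restrict_sub)
  then show ?thesis
    using lift_pred[OF assms(1,2), of "\<lambda>s. snd p (s |` fst p) = snd q (s |` fst q)"]
    unfolding eqv_def by simp
qed

lemma eqv_trans:
  assumes "finite (fst p)" "finite (fst q)" "finite (fst r)" "eqv E p q" "eqv E q r"
  shows "eqv E p r"
proof -
  let ?d = "fst p \<union> fst q \<union> fst r"
  have d: "finite ?d" using assms by simp
  have 1: "{s \<in> seqs ?d. snd p (s |` fst p) = snd q (s |` fst q)} \<in> E ?d"
    by (rule eqv_lift[OF assms(4) d]) auto
  have 2: "{s \<in> seqs ?d. snd q (s |` fst q) = snd r (s |` fst r)} \<in> E ?d"
    by (rule eqv_lift[OF assms(5) d]) auto
  have 3: "{s \<in> seqs ?d. snd p (s |` fst p) = snd r (s |` fst r)} \<in> E ?d"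
    by (rule E_up[OF d E_int[OF d 1 2]]) auto
  show ?thesis by (rule eqv_lower[OF d _ 3]) auto
qed

lemma E_Inter_fin:
  assumes d: "finite d" and I: "finite I" and X: "\<forall>i\<in>I. X i \<in> E d"
  shows "seqs d \<inter> (\<Inter>i\<in>I. X i) \<in> E d"
  using I X
proof (induction I rule: finite_induct)
  case empty
  then show ?case using E_top[OF d] by simp
next
  case (insert x F)
  have "seqs d \<inter> (\<Inter>i\<in>insert x F. X i) = X x \<inter> (seqs d \<inter> (\<Inter>i\<in>F. X i))" by auto
  then show ?case using insert E_int[OF d] by simp
qed

end

locale pctx = ectx E for E :: "'l set \<Rightarrow> ('l \<rightharpoonup> 'k) set set" +
  fixes a :: "'l set" and M :: "('l \<rightharpoonup> 'k) \<Rightarrow> ('f, 'r, 'm) struct"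
  assumes fa: "finite a" and st: "\<forall>s\<in>seqs a. is_struct (M s)"
begin

abbreviation "valid \<equiv> valid_rep E a M"
abbreviation "cl \<equiv> cls E a M"

lemma valid_fin: "valid p \<Longrightarrow> finite (fst p)"
  by (simp add: valid_rep_def)

lemma cls_eq: assumes "valid p" "valid q" shows "cl p = cl q \<longleftrightarrow> eqv E p q"
proof
  assume "cl p = cl q"
  moreover have "q \<in> cl q" unfolding cls_def using assms(2) eqv_refl valid_fin by blast
  ultimately show "eqv E p q" unfolding cls_def by blast
next
  assume pq: "eqv E p q"
  show "cl p = cl q"
  proof (rule set_eqI)
    fix r
    show "r \<in> cl p \<longleftrightarrow> r \<in> cl q"
    proof
      assume "r \<in> cl p"
      then have r: "valid r" "eqv E p r" unfolding cls_def by auto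
      then have "eqv E q r" using eqv_trans[OF _ _ _ eqv_sym[OF pq]] valid_fin assms by blast
      then show "r \<in> cl q" using r unfolding cls_def by blast
    next
      assume "r \<in> cl q"
      then have r: "valid r" "eqv E q r" unfolding cls_def by auto
      then have "eqv E p r" using eqv_trans[OF _ _ _ pq] valid_fin assms by blast
      then show "r \<in> cl p" using r unfolding cls_def by blast
    qed
  qed
qed

lemma rep_cls: assumes "valid p" shows "valid (rep (cl p))" "eqv E p (rep (cl p))"
proof -
  have "p \<in> cl p" unfolding cls_def using assms eqv_refl valid_fin by blast
  then have "rep (cl p) \<in> cl p" unfolding rep_def by (rule someI)
  then show "valid (rep (cl p))" "eqv E p (rep (cl p))" unfolding cls_def by auto
qed

end

lemma evalt_cong: "(\<forall>i\<in>fvt t. v i = v' i) \<Longrightarrow> evalt M v t = evalt M v' t"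
proof (induction t)
  case (Var x) then show ?case by simp
next
  case (Fn f ts)
  then have "\<forall>x\<in>set ts. evalt M v x = evalt M v' x" by auto
  then have "map (evalt M v) ts = map (evalt M v') ts" by (simp only: map_eq_conv)
  then show ?case by (simp del: map_eq_conv)
qed

lemma evalt_in: "is_struct N \<Longrightarrow> (\<forall>i\<in>fvt t. v i \<in> univ N) \<Longrightarrow> evalt N v t \<in> univ N"
proof (induction t)
  case (Var x) then show ?case by simp
next
  case (Fn f ts)
  then have "set (map (evalt N v) ts) \<subseteq> univ N" by auto
  then show ?case using Fn.prems(1) unfolding is_struct_def by simp
qed

lemma sat_cong: "(\<forall>i\<in>fv \<phi>. v i = v' i) \<Longrightarrow> sat M v \<phi> = sat M v' \<phi>"
proof (induction \<phi> arbitrary: v v')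
  case (Rel r ts)
  have "\<forall>t\<in>set ts. evalt M v t = evalt M v' t"
  proof
    fix t assume t: "t \<in> set ts"
    show "evalt M v t = evalt M v' t" by (rule evalt_cong) (use Rel t in auto)
  qed
  then have "map (evalt M v) ts = map (evalt M v') ts" by (simp only: map_eq_conv)
  then show ?case by (simp del: map_eq_conv)
next
  case (Eq t u)
  then show ?case using evalt_cong[of t v v' M] evalt_cong[of u v v' M] by simp
next
  case (Neg \<phi>)
  have "sat M v \<phi> = sat M v' \<phi>" by (rule Neg.IH) (use Neg.prems in simp)
  then show ?case by simp
next
  case (BigAnd I F)
  have "\<forall>i\<in>I. sat M v (F i) = sat M v' (F i)"
  proof
    fix i assume i: "i \<in> I"
    have "\<forall>j\<in>fv (F i). v j = v' j" using BigAnd.prems i by auto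
    then show "sat M v (F i) = sat M v' (F i)" by (rule BigAnd.IH[OF rangeI])
  qed
  then show ?case by simp
next
  case (Ex x \<phi>)
  have "\<And>b. sat M (v(x := b)) \<phi> = sat M (v'(x := b)) \<phi>"
  proof -
    fix b
    show "sat M (v(x := b)) \<phi> = sat M (v'(x := b)) \<phi>"
      by (rule Ex.IH) (use Ex.prems in auto)
  qed
  then show ?case by simp
next
  case (QWF x y \<phi>)
  have "\<And>b c. sat M (v(x := b, y := c)) \<phi> = sat M (v'(x := b, y := c)) \<phi>"
  proof -
    fix b c
    show "sat M (v(x := b, y := c)) \<phi> = sat M (v'(x := b, y := c)) \<phi>"
      by (rule QWF.IH) (use QWF.prems in auto)
  qed
  then show ?case by simp
qed

definition vl :: "('l \<rightharpoonup> 'k) \<Rightarrow> (nat \<Rightarrow> 'l set \<times> (('l \<rightharpoonup> 'k) \<Rightarrow> 'm)) \<Rightarrow> nat \<Rightarrow> 'm" where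
  "vl s P i = snd (P i) (s |` fst (P i))"

lemma vl_upd: "vl s (P(x := q)) = (vl s P)(x := snd q (s |` fst q))"
  by (rule ext) (simp add: vl_def)


lemma sat_upd1_cong: "fv \<phi> \<subseteq> insert x D \<Longrightarrow> \<forall>i\<in>D. v i = v' i \<Longrightarrow>
    sat N (v(x := m)) \<phi> = sat N (v'(x := m)) \<phi>"
  by (rule sat_cong) auto

lemma sat_upd2_cong: "fv \<phi> \<subseteq> insert x (insert y D) \<Longrightarrow> \<forall>i\<in>D. v i = v' i \<Longrightarrow>
    sat N (v(x := m, y := n)) \<phi> = sat N (v'(x := m, y := n)) \<phi>"
  by (rule sat_cong) auto

lemma vl_restr: "fst (P i) \<subseteq> c \<Longrightarrow> vl (s |` c) P i = vl s P i"
  unfolding vl_def by (simp add: Int_absorb1)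

context pctx
begin

lemma st_at: "s \<in> seqs c \<Longrightarrow> a \<subseteq> c \<Longrightarrow> is_struct (M (s |` a))"
proof -
  assume "s \<in> seqs c" "a \<subseteq> c"
  then have "s |` a \<in> seqs a" by (rule seqs_restrict)
  then show ?thesis using st by (rule bspec[rotated])
qed

lemma valid_in: "valid p \<Longrightarrow> s \<in> seqs c \<Longrightarrow> fst p \<subseteq> c \<Longrightarrow> snd p (s |` fst p) \<in> univ (M (s |` a))"
proof -
  assume p: "valid p" and s: "s \<in> seqs c" and c: "fst p \<subseteq> c"
  have "s |` fst p \<in> seqs (fst p)" using seqs_restrict[OF s c] .
  then have "snd p (s |` fst p) \<in> univ (M (s |` fst p |` a))" using p unfolding valid_rep_def by blast
  moreover have "a \<subseteq> fst p" using p unfolding valid_rep_def by blast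
  ultimately show ?thesis by (simp add: Int_absorb1)
qed

lemma map_evrep:
  assumes ps: "\<forall>p\<in>set ps. valid p" and c: "finite c" "\<forall>p\<in>set ps. fst p \<subseteq> c"
  defines "S \<equiv> supp a (map cl ps)"
  shows "finite S" "a \<subseteq> S"
    "{s \<in> seqs (S \<union> c). map (evrep (s |` S)) (map cl ps) = map (\<lambda>p. snd p (s |` fst p)) ps} \<in> E (S \<union> c)"
proof -
  have rv: "\<And>p. p \<in> set ps \<Longrightarrow> valid (rep (cl p)) \<and> eqv E p (rep (cl p))"
  proof -
    fix p assume "p \<in> set ps"
    then have "valid p" using ps by (rule bspec[rotated])
    then show "valid (rep (cl p)) \<and> eqv E p (rep (cl p))" using rep_cls by simp
  qed
  have "\<forall>x\<in>set (map cl ps). finite (fst (rep x))" using rv valid_fin by auto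
  then have Sfin: "finite S" unfolding S_def supp_def using fa by simp
  show "finite S" by (rule Sfin)
  show "a \<subseteq> S" unfolding S_def supp_def by auto
  have sub: "\<And>p. p \<in> set ps \<Longrightarrow> fst (rep (cl p)) \<subseteq> S" unfolding S_def supp_def by auto
  let ?d = "S \<union> c"
  have d: "finite ?d" using Sfin c by simp
  let ?X = "\<lambda>p. {s \<in> seqs ?d. snd p (s |` fst p) = snd (rep (cl p)) (s |` fst (rep (cl p)))}"
  have X: "\<forall>p\<in>set ps. ?X p \<in> E ?d"
  proof
    fix p assume p: "p \<in> set ps"
    show "?X p \<in> E ?d"
      by (rule eqv_lift[OF conjunct2[OF rv[OF p]] d]) (use p c sub[OF p] in auto)
  qed
  have I: "seqs ?d \<inter> (\<Inter>p\<in>set ps. ?X p) \<in> E ?d" by (rule E_Inter_fin[OF d _ X]) simp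
  show "{s \<in> seqs ?d. map (evrep (s |` S)) (map cl ps) = map (\<lambda>p. snd p (s |` fst p)) ps} \<in> E ?d"
  proof (rule E_up[OF d I])
    show "seqs ?d \<inter> (\<Inter>p\<in>set ps. ?X p)
      \<subseteq> {s \<in> seqs ?d. map (evrep (s |` S)) (map cl ps) = map (\<lambda>p. snd p (s |` fst p)) ps}"
    proof
      fix s :: "'l \<rightharpoonup> 'k" assume s: "s \<in> seqs ?d \<inter> (\<Inter>p\<in>set ps. ?X p)"
      have "\<And>p. p \<in> set ps \<Longrightarrow> evrep (s |` S) (cl p) = snd p (s |` fst p)"
      proof -
        fix p assume p: "p \<in> set ps"
        have "evrep (s |` S) (cl p) = snd (rep (cl p)) (s |` fst (rep (cl p)))"
          unfolding evrep_def using sub[OF p] by (simp add: Int_absorb1)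
        also have "\<dots> = snd p (s |` fst p)" using s p by auto
        finally show "evrep (s |` S) (cl p) = snd p (s |` fst p)" .
      qed
      then show "s \<in> {s \<in> seqs ?d. map (evrep (s |` S)) (map cl ps) = map (\<lambda>p. snd p (s |` fst p)) ps}"
        using s by auto
    qed
  qed simp
qed


lemma vl_in: "valid (P i) \<Longrightarrow> (s::'l \<rightharpoonup> 'k) \<in> seqs c \<Longrightarrow> fst (P i) \<subseteq> c \<Longrightarrow> vl s P i \<in> univ (M (s |` a))"
  unfolding vl_def by (rule valid_in)

lemma term_valid:
  assumes c: "finite c" "a \<subseteq> c" and P: "\<forall>i\<in>D. valid (P i) \<and> fst (P i) \<subseteq> c" and t: "fvt t \<subseteq> D"
  shows "valid (c, \<lambda>s. evalt (M (s |` a)) (vl s P) t)"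
  unfolding valid_rep_def
proof (intro conjI ballI)
  fix s :: "'l \<rightharpoonup> 'k" assume s: "s \<in> seqs (fst (c, \<lambda>s. evalt (M (s |` a)) (vl s P) t))"
  then have s': "s \<in> seqs c" by simp
  have "evalt (M (s |` a)) (vl s P) t \<in> univ (M (s |` a))"
  proof (rule evalt_in)
    show "is_struct (M (s |` a))" by (rule st_at[OF s' c(2)])
    show "\<forall>i\<in>fvt t. vl s P i \<in> univ (M (s |` a))"
      using P t vl_in[OF _ s'] by blast
  qed
  then show "snd (c, \<lambda>s. evalt (M (s |` a)) (vl s P) t) s \<in> univ (M (s |` a))" by simp
qed (use c in auto)

lemma term_los:
  assumes c: "finite c" "a \<subseteq> c" and P: "\<forall>i\<in>D. valid (P i) \<and> fst (P i) \<subseteq> c"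
  shows "fvt t \<subseteq> D \<Longrightarrow> evalt (ext_prod E a M) (\<lambda>i. cl (P i)) t = cl (c, \<lambda>s. evalt (M (s |` a)) (vl s P) t)"
proof (induction t)
  case (Var i)
  then have i: "i \<in> D" by simp
  have v: "valid (P i)" "fst (P i) \<subseteq> c" using P i by auto
  have v2: "valid (c, \<lambda>s. evalt (M (s |` a)) (vl s P) (Var i))" by (rule term_valid[OF c P Var])
  have "eqv E (P i) (c, \<lambda>s. evalt (M (s |` a)) (vl s P) (Var i))"
  proof (rule eqv_lower[OF c(1)])
    show "fst (P i) \<union> fst (c, \<lambda>s. evalt (M (s |` a)) (vl s P) (Var i)) \<subseteq> c" using v by simp
    have "{s \<in> seqs c. snd (P i) (s |` fst (P i)) = snd (c, \<lambda>s. evalt (M (s |` a)) (vl s P) (Var i)) (s |` fst (c, \<lambda>s. evalt (M (s |` a)) (vl s P) (Var i)))} = seqs c"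
      using v(2) by (auto simp: vl_def Int_absorb1 Int_absorb2)
    then show "{s \<in> seqs c. snd (P i) (s |` fst (P i)) = snd (c, \<lambda>s. evalt (M (s |` a)) (vl s P) (Var i)) (s |` fst (c, \<lambda>s. evalt (M (s |` a)) (vl s P) (Var i)))} \<in> E c"
      using E_top[OF c(1)] by simp
  qed
  then show ?case using cls_eq[OF v(1) v2] by simp
next
  case (Fn f ts)
  let ?T = "\<lambda>t s. evalt (M (s |` a)) (vl s P) t"
  define ps where "ps = map (\<lambda>t. (c, ?T t)) ts"
  define S where "S = supp a (map cl ps)"
  have ts: "\<And>t. t \<in> set ts \<Longrightarrow> fvt t \<subseteq> D" using Fn.prems by auto
  have psv: "\<forall>p\<in>set ps. valid p" unfolding ps_def using term_valid[OF c P ts] by auto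
  have psc: "\<forall>p\<in>set ps. fst p \<subseteq> c" unfolding ps_def by auto
  have ev: "map (evalt (ext_prod E a M) (\<lambda>i. cl (P i))) ts = map cl ps"
    unfolding ps_def using Fn.IH ts by simp
  note me = map_evrep[OF psv c(1) psc, folded S_def]
  have lhs: "evalt (ext_prod E a M) (\<lambda>i. cl (P i)) (Fn f ts)
      = cl (S, \<lambda>s. fnI (M (s |` a)) f (map (evrep s) (map cl ps)))"
    using ev unfolding S_def ext_prod_def by simp
  have vS: "valid (S, \<lambda>s. fnI (M (s |` a)) f (map (evrep s) (map cl ps)))"
    unfolding valid_rep_def
  proof (intro conjI ballI)
    fix s :: "'l \<rightharpoonup> 'k" assume "s \<in> seqs (fst (S, \<lambda>s. fnI (M (s |` a)) f (map (evrep s) (map cl ps))))"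
    then have s: "s \<in> seqs S" by simp
    have "\<forall>p\<in>set ps. evrep s (cl p) \<in> univ (M (s |` a))"
    proof
      fix p assume p: "p \<in> set ps"
      have vp: "valid p" using psv p by blast
      have "fst (rep (cl p)) \<subseteq> S" unfolding S_def supp_def using p by auto
      then show "evrep s (cl p) \<in> univ (M (s |` a))"
        unfolding evrep_def using valid_in[OF rep_cls(1)[OF vp] s] by simp
    qed
    then have "set (map (evrep s) (map cl ps)) \<subseteq> univ (M (s |` a))" by auto
    then show "snd (S, \<lambda>s. fnI (M (s |` a)) f (map (evrep s) (map cl ps))) s \<in> univ (M (s |` a))"
      using st_at[OF s me(2)] unfolding is_struct_def by simp
  qed (use me in auto)
  have vc: "valid (c, ?T (Fn f ts))" by (rule term_valid[OF c P Fn.prems])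
  have "eqv E (S, \<lambda>s. fnI (M (s |` a)) f (map (evrep s) (map cl ps))) (c, ?T (Fn f ts))"
  proof (rule eqv_lower[of "S \<union> c"])
    show "finite (S \<union> c)" using me c by simp
    show "fst (S, \<lambda>s. fnI (M (s |` a)) f (map (evrep s) (map cl ps))) \<union> fst (c, ?T (Fn f ts)) \<subseteq> S \<union> c" by simp
    show "{s \<in> seqs (S \<union> c).
        snd (S, \<lambda>s. fnI (M (s |` a)) f (map (evrep s) (map cl ps))) (s |` fst (S, \<lambda>s. fnI (M (s |` a)) f (map (evrep s) (map cl ps)))) =
        snd (c, ?T (Fn f ts)) (s |` fst (c, ?T (Fn f ts)))} \<in> E (S \<union> c)"
    proof (rule E_up[OF _ me(3)])
      show "finite (S \<union> c)" using me c by simp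
    next
      show "{s \<in> seqs (S \<union> c). map (evrep (s |` S)) (map cl ps) = map (\<lambda>p. snd p (s |` fst p)) ps}
        \<subseteq> {s \<in> seqs (S \<union> c).
        snd (S, \<lambda>s. fnI (M (s |` a)) f (map (evrep s) (map cl ps))) (s |` fst (S, \<lambda>s. fnI (M (s |` a)) f (map (evrep s) (map cl ps)))) =
        snd (c, ?T (Fn f ts)) (s |` fst (c, ?T (Fn f ts)))}"
      proof (rule subsetI)
        fix s :: "'l \<rightharpoonup> 'k" assume "s \<in> {s \<in> seqs (S \<union> c). map (evrep (s |` S)) (map cl ps) = map (\<lambda>p. snd p (s |` fst p)) ps}"
        then have s: "s \<in> seqs (S \<union> c)" and eq: "map (evrep (s |` S)) (map cl ps) = map (\<lambda>p. snd p (s |` fst p)) ps"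
          by auto
        have a1: "s |` S |` a = s |` a" using me(2) by (simp add: Int_absorb1)
        have a2: "s |` c |` a = s |` a" using c(2) by (simp add: Int_absorb1)
        have "map (\<lambda>p. snd p (s |` fst p)) ps = map (\<lambda>t. ?T t (s |` c)) ts"
          unfolding ps_def by simp
        then have "snd (S, \<lambda>s. fnI (M (s |` a)) f (map (evrep s) (map cl ps))) (s |` fst (S, \<lambda>s. fnI (M (s |` a)) f (map (evrep s) (map cl ps)))) =
          snd (c, ?T (Fn f ts)) (s |` fst (c, ?T (Fn f ts)))"
          using eq a1 a2 by (simp del: map_eq_conv restrict_restrict)
        then show "s \<in> {s \<in> seqs (S \<union> c).
        snd (S, \<lambda>s. fnI (M (s |` a)) f (map (evrep s) (map cl ps))) (s |` fst (S, \<lambda>s. fnI (M (s |` a)) f (map (evrep s) (map cl ps)))) =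
        snd (c, ?T (Fn f ts)) (s |` fst (c, ?T (Fn f ts)))}" using s by simp
      qed
    next
      show "{s \<in> seqs (S \<union> c).
        snd (S, \<lambda>s. fnI (M (s |` a)) f (map (evrep s) (map cl ps))) (s |` fst (S, \<lambda>s. fnI (M (s |` a)) f (map (evrep s) (map cl ps)))) =
        snd (c, ?T (Fn f ts)) (s |` fst (c, ?T (Fn f ts)))} \<subseteq> seqs (S \<union> c)" by blast
    qed
  qed
  then show ?case using lhs cls_eq[OF vS vc] by simp
qed


lemma main:
  assumes wf: "E_wellfounded E"
  shows "wff (\<phi> :: ('f, 'r, 'k) fm) \<Longrightarrow> fv \<phi> \<subseteq> D \<Longrightarrow> finite c \<Longrightarrow> a \<subseteq> c \<Longrightarrow>
    \<forall>i\<in>D. valid (P i) \<and> fst (P i) \<subseteq> c \<Longrightarrow>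
    sat (ext_prod E a M) (\<lambda>i. cl (P i)) \<phi> \<longleftrightarrow> {s \<in> seqs c. sat (M (s |` a)) (vl s P) \<phi>} \<in> E c"
proof (induction \<phi> arbitrary: D c P)
  case (Rel r ts)
  note c = Rel.prems(3,4) and P = Rel.prems(5)
  let ?T = "\<lambda>t s. evalt (M (s |` a)) (vl s P) t"
  define ps where "ps = map (\<lambda>t. (c, ?T t)) ts"
  define S where "S = supp a (map cl ps)"
  have ts: "\<And>t. t \<in> set ts \<Longrightarrow> fvt t \<subseteq> D" using Rel.prems(2) by auto
  have psv: "\<forall>p\<in>set ps. valid p" unfolding ps_def using term_valid[OF c P ts] by auto
  have psc: "\<forall>p\<in>set ps. fst p \<subseteq> c" unfolding ps_def by auto
  have ev: "map (evalt (ext_prod E a M) (\<lambda>i. cl (P i))) ts = map cl ps"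
    unfolding ps_def using term_los[OF c P] ts by simp
  note me = map_evrep[OF psv c(1) psc, folded S_def]
  have lhs: "sat (ext_prod E a M) (\<lambda>i. cl (P i)) (Rel r ts) \<longleftrightarrow>
     {s \<in> seqs S. relI (M (s |` a)) r (map (evrep s) (map cl ps))} \<in> E S"
    using ev unfolding S_def ext_prod_def by simp
  have rhs: "{s \<in> seqs c. sat (M (s |` a)) (vl s P) (Rel r ts)} = {s \<in> seqs c. relI (M (s |` a)) r (map (\<lambda>t. ?T t s) ts)}"
    by simp
  have "{s \<in> seqs S. relI (M (s |` a)) r (map (evrep s) (map cl ps))} \<in> E S \<longleftrightarrow>
      {s \<in> seqs c. relI (M (s |` a)) r (map (\<lambda>t. ?T t s) ts)} \<in> E c"
  proof (rule transfer[OF _ _ _ me(3)])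
    show "finite (S \<union> c)" using me c by simp
    show "S \<subseteq> S \<union> c" "c \<subseteq> S \<union> c" by auto
    fix s :: "'l \<rightharpoonup> 'k"
    assume "s \<in> {s \<in> seqs (S \<union> c). map (evrep (s |` S)) (map cl ps) = map (\<lambda>p. snd p (s |` fst p)) ps}"
    then have eq: "map (evrep (s |` S)) (map cl ps) = map (\<lambda>p. snd p (s |` fst p)) ps" by simp
    have a1: "s |` S |` a = s |` a" using me(2) by (simp add: Int_absorb1)
    have a2: "s |` c |` a = s |` a" using c(2) by (simp add: Int_absorb1)
    have "map (\<lambda>p. snd p (s |` fst p)) ps = map (\<lambda>t. ?T t (s |` c)) ts"
      unfolding ps_def by simp
    then show "relI (M (s |` S |` a)) r (map (evrep (s |` S)) (map cl ps)) \<longleftrightarrow>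
       relI (M (s |` c |` a)) r (map (\<lambda>t. ?T t (s |` c)) ts)"
      using eq a1 a2 by (simp del: map_eq_conv restrict_restrict)
  qed
  then show ?case using lhs rhs by simp
next
  case (Eq t u)
  note c = Eq.prems(3,4) and P = Eq.prems(5)
  let ?T = "\<lambda>t s. evalt (M (s |` a)) (vl s P) t"
  have ft: "fvt t \<subseteq> D" and fu: "fvt u \<subseteq> D" using Eq.prems(2) by auto
  have "sat (ext_prod E a M) (\<lambda>i. cl (P i)) (Eq t u) \<longleftrightarrow> cl (c, ?T t) = cl (c, ?T u)"
    using term_los[OF c P ft] term_los[OF c P fu] by simp
  also have "\<dots> \<longleftrightarrow> eqv E (c, ?T t) (c, ?T u)"
    by (rule cls_eq[OF term_valid[OF c P ft] term_valid[OF c P fu]])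
  also have "\<dots> \<longleftrightarrow> {s \<in> seqs c. ?T t (s |` c) = ?T u (s |` c)} \<in> E c"
    unfolding eqv_def by simp
  also have "{s \<in> seqs c. ?T t (s |` c) = ?T u (s |` c)} = {s \<in> seqs c. sat (M (s |` a)) (vl s P) (Eq t u)}"
  proof (rule Collect_cong)
    fix s :: "'l \<rightharpoonup> 'k"
    show "(s \<in> seqs c \<and> ?T t (s |` c) = ?T u (s |` c)) \<longleftrightarrow> (s \<in> seqs c \<and> sat (M (s |` a)) (vl s P) (Eq t u))"
    proof (cases "s \<in> seqs c")
      case True
      then have "s |` c = s" by (rule restrict_self)
      then show ?thesis by (simp del: restrict_restrict)
    qed simp
  qed
  finally show ?case .
next
  case (Neg \<phi>)
  note c = Neg.prems(3,4) and P = Neg.prems(5)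
  have "sat (ext_prod E a M) (\<lambda>i. cl (P i)) \<phi> \<longleftrightarrow> {s \<in> seqs c. sat (M (s |` a)) (vl s P) \<phi>} \<in> E c"
    by (rule Neg.IH) (use Neg.prems in auto)
  moreover have "{s \<in> seqs c. sat (M (s |` a)) (vl s P) \<phi>} \<notin> E c \<longleftrightarrow> seqs c - {s \<in> seqs c. sat (M (s |` a)) (vl s P) \<phi>} \<in> E c"
    by (rule E_compl[OF c(1)]) auto
  moreover have "seqs c - {s \<in> seqs c. sat (M (s |` a)) (vl s P) \<phi>} = {s \<in> seqs c. sat (M (s |` a)) (vl s P) (Neg \<phi>)}"
    by auto
  ultimately show ?case by simp
next
  case (BigAnd I F)
  note c = BigAnd.prems(3,4) and P = BigAnd.prems(5)
  let ?X = "\<lambda>i. {s \<in> seqs c. sat (M (s |` a)) (vl s P) (F i)}"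
  have IH: "\<forall>i\<in>I. sat (ext_prod E a M) (\<lambda>i. cl (P i)) (F i) \<longleftrightarrow> ?X i \<in> E c"
  proof
    fix i assume i: "i \<in> I"
    show "sat (ext_prod E a M) (\<lambda>i. cl (P i)) (F i) \<longleftrightarrow> ?X i \<in> E c"
      by (rule BigAnd.IH[OF rangeI]) (use BigAnd.prems i in auto)
  qed
  have lhs: "sat (ext_prod E a M) (\<lambda>i. cl (P i)) (BigAnd I F) \<longleftrightarrow> (\<forall>i\<in>I. ?X i \<in> E c)"
    using IH by simp
  show ?case
  proof (cases "I = {}")
    case True
    then show ?thesis using lhs E_top[OF c(1)] by simp
  next
    case False
    have eqI: "{s \<in> seqs c. sat (M (s |` a)) (vl s P) (BigAnd I F)} = \<Inter> (?X ` I)"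
      using False by auto
    have "(\<forall>i\<in>I. ?X i \<in> E c) \<longleftrightarrow> \<Inter> (?X ` I) \<in> E c"
    proof
      assume all: "\<forall>i\<in>I. ?X i \<in> E c"
      have kc: "kappa_complete (E c)" using ext c(1) by (simp add: extender_system_def)
      have cI: "(card_of I, card_of (UNIV :: 'k set)) \<in> ordLess"
        using BigAnd.prems(1) by simp
      have "(card_of (?X ` I), card_of (UNIV :: 'k set)) \<in> ordLess"
        by (rule ordLeq_ordLess_trans[OF card_of_image cI])
      moreover have "?X ` I \<subseteq> E c" using all by blast
      moreover have "?X ` I \<noteq> {}" using False by simp
      ultimately show "\<Inter> (?X ` I) \<in> E c" using kc unfolding kappa_complete_def by blast
    next
      assume "\<Inter> (?X ` I) \<in> E c"
      then show "\<forall>i\<in>I. ?X i \<in> E c"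
        using E_up[OF c(1)] by (metis (no_types, lifting) INT_lower mem_Collect_eq subsetI)
    qed
    then show ?thesis using lhs eqI by simp
  qed
next
  case (Ex x \<phi>)
  note c = Ex.prems(3,4) and P = Ex.prems(5)
  have fvx: "fv \<phi> \<subseteq> insert x D" using Ex.prems(2) by auto
  let ?S = "{s \<in> seqs c. sat (M (s |` a)) (vl s P) (Ex x \<phi>)}"
  have IHq: "sat (ext_prod E a M) (\<lambda>i. cl ((P(x := q)) i)) \<phi> \<longleftrightarrow>
      {s \<in> seqs (c \<union> fst q). sat (M (s |` a)) (vl s (P(x := q))) \<phi>} \<in> E (c \<union> fst q)"
    if q: "valid q" for q
  proof (rule Ex.IH)
    show "wff \<phi>" using Ex.prems(1) by simp
    show "fv \<phi> \<subseteq> insert x D" by (rule fvx)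
    show "finite (c \<union> fst q)" using c valid_fin[OF q] by simp
    show "a \<subseteq> c \<union> fst q" using c by auto
    show "\<forall>i\<in>insert x D. valid ((P(x := q)) i) \<and> fst ((P(x := q)) i) \<subseteq> c \<union> fst q"
      using P q by auto
  qed
  have upd: "(\<lambda>i. cl (P i))(x := cl q) = (\<lambda>i. cl ((P(x := q)) i))" for q
    by (rule HOL.ext) simp
  show ?case
  proof
    assume "sat (ext_prod E a M) (\<lambda>i. cl (P i)) (Ex x \<phi>)"
    then obtain e where e: "e \<in> prod_univ E a M" and se: "sat (ext_prod E a M) ((\<lambda>i. cl (P i))(x := e)) \<phi>"
      unfolding ext_prod_def by auto
    obtain q where q: "valid q" and eq: "e = cl q" using e unfolding prod_univ_def by blast
    let ?c' = "c \<union> fst q"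
    have c': "finite ?c'" using c valid_fin[OF q] by simp
    have Sq: "{s \<in> seqs ?c'. sat (M (s |` a)) (vl s (P(x := q))) \<phi>} \<in> E ?c'"
      using IHq[OF q] se unfolding eq upd by simp
    have "{s \<in> seqs ?c'. (\<lambda>s. sat (M (s |` a)) (vl s P) (Ex x \<phi>)) (s |` c)} \<in> E ?c'"
    proof (rule E_up[OF c' Sq])
      show "{s \<in> seqs ?c'. sat (M (s |` a)) (vl s (P(x := q))) \<phi>}
        \<subseteq> {s \<in> seqs ?c'. (\<lambda>s. sat (M (s |` a)) (vl s P) (Ex x \<phi>)) (s |` c)}"
      proof
        fix s :: "'l \<rightharpoonup> 'k"
        assume "s \<in> {s \<in> seqs ?c'. sat (M (s |` a)) (vl s (P(x := q))) \<phi>}"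
        then have s: "s \<in> seqs ?c'" and ss: "sat (M (s |` a)) (vl s (P(x := q))) \<phi>" by auto
        have a2: "s |` c |` a = s |` a" using c(2) by (simp add: Int_absorb1)
        have m: "snd q (s |` fst q) \<in> univ (M (s |` a))" by (rule valid_in[OF q s]) simp
        have "\<forall>i\<in>D. vl s P i = vl (s |` c) P i" using P vl_restr by metis
        then have "sat (M (s |` a)) ((vl s P)(x := snd q (s |` fst q))) \<phi> =
            sat (M (s |` a)) ((vl (s |` c) P)(x := snd q (s |` fst q))) \<phi>"
          by (rule sat_upd1_cong[OF fvx])
        then have "sat (M (s |` a)) ((vl (s |` c) P)(x := snd q (s |` fst q))) \<phi>"
          using ss by (simp add: vl_upd)
        then have "sat (M (s |` c |` a)) (vl (s |` c) P) (Ex x \<phi>)"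
          using m a2 by (simp del: restrict_restrict) blast
        then show "s \<in> {s \<in> seqs ?c'. (\<lambda>s. sat (M (s |` a)) (vl s P) (Ex x \<phi>)) (s |` c)}"
          using s by simp
      qed
    qed blast
    then show "?S \<in> E c" using lift_pred[OF c', of c] by simp
  next
    assume S: "?S \<in> E c"
    define w where "w s = (if \<exists>m\<in>univ (M (s |` a)). sat (M (s |` a)) ((vl s P)(x := m)) \<phi>
      then SOME m. m \<in> univ (M (s |` a)) \<and> sat (M (s |` a)) ((vl s P)(x := m)) \<phi>
      else SOME m. m \<in> univ (M (s |` a)))" for s
    have w1: "w s \<in> univ (M (s |` a))" if s: "s \<in> seqs c" for s
    proof (cases "\<exists>m\<in>univ (M (s |` a)). sat (M (s |` a)) ((vl s P)(x := m)) \<phi>")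
      case True
      then have "\<exists>m. m \<in> univ (M (s |` a)) \<and> sat (M (s |` a)) ((vl s P)(x := m)) \<phi>" by blast
      then show ?thesis unfolding w_def using True by (metis (mono_tags, lifting) someI_ex)
    next
      case False
      have "univ (M (s |` a)) \<noteq> {}" using st_at[OF s c(2)] unfolding is_struct_def by blast
      then have "\<exists>m. m \<in> univ (M (s |` a))" by blast
      then show ?thesis unfolding w_def using False by (metis (mono_tags, lifting) someI_ex)
    qed
    have w2: "sat (M (s |` a)) ((vl s P)(x := w s)) \<phi>" if s: "s \<in> ?S" for s
    proof -
      have "\<exists>m. m \<in> univ (M (s |` a)) \<and> sat (M (s |` a)) ((vl s P)(x := m)) \<phi>" using s by auto
      then have "w s \<in> univ (M (s |` a)) \<and> sat (M (s |` a)) ((vl s P)(x := w s)) \<phi>"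
        unfolding w_def by (simp add: Bex_def) (rule someI_ex)
      then show ?thesis by blast
    qed
    let ?q = "(c, w)"
    have q: "valid ?q" unfolding valid_rep_def using c w1 by auto
    have "{s \<in> seqs (c \<union> fst ?q). sat (M (s |` a)) (vl s (P(x := ?q))) \<phi>} \<in> E (c \<union> fst ?q)"
    proof -
      have "?S \<subseteq> {s \<in> seqs c. sat (M (s |` a)) (vl s (P(x := ?q))) \<phi>}"
      proof
        fix s :: "'l \<rightharpoonup> 'k" assume s: "s \<in> ?S"
        then have "s |` c = s" using restrict_self by blast
        then have "vl s (P(x := ?q)) = (vl s P)(x := w s)" by (simp add: vl_upd)
        then show "s \<in> {s \<in> seqs c. sat (M (s |` a)) (vl s (P(x := ?q))) \<phi>}"
          using w2[OF s] s by simp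
      qed
      then have "{s \<in> seqs c. sat (M (s |` a)) (vl s (P(x := ?q))) \<phi>} \<in> E c"
        by (rule E_up[OF c(1) S]) blast
      then show ?thesis by simp
    qed
    then have "sat (ext_prod E a M) ((\<lambda>i. cl (P i))(x := cl ?q)) \<phi>"
      using IHq[OF q] unfolding upd by simp
    moreover have "cl ?q \<in> prod_univ E a M" unfolding prod_univ_def using q by blast
    ultimately show "sat (ext_prod E a M) (\<lambda>i. cl (P i)) (Ex x \<phi>)"
      unfolding ext_prod_def by auto
  qed
next
  case (QWF x y \<phi>)
  note c = QWF.prems(3,4) and P = QWF.prems(5)
  have fvxy: "fv \<phi> \<subseteq> insert x (insert y D)" using QWF.prems(2) by auto
  let ?W = "{s \<in> seqs c. sat (M (s |` a)) (vl s P) (QWF x y \<phi>)}"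
  have IHq: "sat (ext_prod E a M) (\<lambda>i. cl ((P(x := q1, y := q2)) i)) \<phi> \<longleftrightarrow>
      {s \<in> seqs (c \<union> fst q1 \<union> fst q2). sat (M (s |` a)) (vl s (P(x := q1, y := q2))) \<phi>} \<in> E (c \<union> fst q1 \<union> fst q2)"
    if q1: "valid q1" and q2: "valid q2" for q1 q2
  proof (rule QWF.IH)
    show "wff \<phi>" using QWF.prems(1) by simp
    show "fv \<phi> \<subseteq> insert x (insert y D)" by (rule fvxy)
    show "finite (c \<union> fst q1 \<union> fst q2)" using c valid_fin[OF q1] valid_fin[OF q2] by simp
    show "a \<subseteq> c \<union> fst q1 \<union> fst q2" using c by auto
    show "\<forall>i\<in>insert x (insert y D). valid ((P(x := q1, y := q2)) i) \<and> fst ((P(x := q1, y := q2)) i) \<subseteq> c \<union> fst q1 \<union> fst q2"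
      using P q1 q2 by auto
  qed
  have upd: "(\<lambda>i. cl (P i))(x := cl q1, y := cl q2) = (\<lambda>i. cl ((P(x := q1, y := q2)) i))" for q1 q2
    by (rule HOL.ext) simp
  have univP: "univ (ext_prod E a M) = prod_univ E a M" unfolding ext_prod_def by simp
  show ?case
  proof
    assume wfP: "sat (ext_prod E a M) (\<lambda>i. cl (P i)) (QWF x y \<phi>)"
    show "?W \<in> E c"
    proof (rule ccontr)
      assume nW: "?W \<notin> E c"
      have Wsub: "?W \<subseteq> seqs c" by (rule Collect_restrict)
      have B: "seqs c - ?W \<in> E c" by (rule iffD1[OF E_compl[OF c(1) Wsub] nW])
      let ?B = "seqs c - ?W"
      have exh: "\<exists>h. (\<forall>j. h j \<in> univ (M (s |` a))) \<and> (\<forall>j. sat (M (s |` a)) ((vl s P)(x := h (Suc j), y := h j)) \<phi>)"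
        if s: "s \<in> ?B" for s
      proof -
        have s1: "s \<in> seqs c" using s by (rule DiffD1)
        have s2: "s \<notin> ?W" using s by (elim DiffE)
        have "\<not> sat (M (s |` a)) (vl s P) (QWF x y \<phi>)" using s1 s2 by (simp only: mem_Collect_eq simp_thms)
        then show ?thesis by (simp only: sat.simps not_not)
      qed
      define hs where "hs s = (SOME h. (\<forall>j. h j \<in> univ (M (s |` a))) \<and> (\<forall>j. sat (M (s |` a)) ((vl s P)(x := h (Suc j), y := h j)) \<phi>))" for s
      have hs: "(\<forall>j. hs s j \<in> univ (M (s |` a))) \<and> (\<forall>j. sat (M (s |` a)) ((vl s P)(x := hs s (Suc j), y := hs s j)) \<phi>)"
        if s: "s \<in> ?B" for s
        unfolding hs_def by (rule someI_ex[OF exh[OF s]])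
      define q where "q j = (c, \<lambda>s. if s \<in> ?B then hs s j else SOME m. m \<in> univ (M (s |` a)))" for j
      have qv: "valid (q j)" for j
        unfolding valid_rep_def
      proof (intro conjI ballI)
        fix s :: "'l \<rightharpoonup> 'k" assume "s \<in> seqs (fst (q j))"
        then have s: "s \<in> seqs c" unfolding q_def by simp
        have "univ (M (s |` a)) \<noteq> {}" using st_at[OF s c(2)] unfolding is_struct_def by blast
        then have "(SOME m. m \<in> univ (M (s |` a))) \<in> univ (M (s |` a))" by (simp add: some_in_eq)
        show "snd (q j) s \<in> univ (M (s |` a))"
        proof (cases "s \<in> ?B")
          case True
          have "hs s j \<in> univ (M (s |` a))" using conjunct1[OF hs[OF True]] by (rule spec)
          then show ?thesis by (simp only: q_def snd_conv if_P[OF True])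
        next
          case False
          then show ?thesis using \<open>(SOME m. m \<in> univ (M (s |` a))) \<in> univ (M (s |` a))\<close>
            by (simp only: q_def snd_conv if_not_P[OF False] if_False)
        qed
      qed (use c in \<open>auto simp: q_def\<close>)
      have "\<exists>g. (\<forall>j. g j \<in> univ (ext_prod E a M)) \<and> (\<forall>j. sat (ext_prod E a M) ((\<lambda>i. cl (P i))(x := g (Suc j), y := g j)) \<phi>)"
      proof (intro exI conjI allI)
        fix j
        show "cl (q j) \<in> univ (ext_prod E a M)" unfolding univP prod_univ_def using qv by blast
        have "?B \<subseteq> {s \<in> seqs c. sat (M (s |` a)) (vl s (P(x := q (Suc j), y := q j))) \<phi>}"
        proof
          fix s :: "'l \<rightharpoonup> 'k" assume s: "s \<in> ?B"
          then have sc: "s |` c = s" using restrict_self by blast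
          have "vl s (P(x := q (Suc j), y := q j)) = (vl s P)(x := hs s (Suc j), y := hs s j)"
            using s sc by (simp add: vl_upd q_def)
          then show "s \<in> {s \<in> seqs c. sat (M (s |` a)) (vl s (P(x := q (Suc j), y := q j))) \<phi>}"
            using hs[OF s] s by simp
        qed
        then have "{s \<in> seqs c. sat (M (s |` a)) (vl s (P(x := q (Suc j), y := q j))) \<phi>} \<in> E c"
          by (rule E_up[OF c(1) B]) blast
        then show "sat (ext_prod E a M) ((\<lambda>i. cl (P i))(x := cl (q (Suc j)), y := cl (q j))) \<phi>"
          unfolding upd using IHq[OF qv qv] by (simp add: q_def)
      qed
      then show False using wfP by simp
    qed
  next
    assume W: "?W \<in> E c"
    show "sat (ext_prod E a M) (\<lambda>i. cl (P i)) (QWF x y \<phi>)"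
    proof (simp only: sat.simps, rule notI, elim exE conjE)
      fix g
      assume gu: "\<forall>j. g j \<in> univ (ext_prod E a M)"
        and gs: "\<forall>j. sat (ext_prod E a M) ((\<lambda>i. cl (P i))(x := g (Suc j), y := g j)) \<phi>"
      have "\<forall>j. \<exists>q. valid q \<and> g j = cl q" using gu unfolding univP prod_univ_def by blast
      then obtain q where q: "\<forall>j. valid (q j) \<and> g j = cl (q j)" by metis
      define cj where "cj j = c \<union> fst (q (Suc j)) \<union> fst (q j)" for j
      define T where "T j = {s \<in> seqs (cj j). sat (M (s |` a)) (vl s (P(x := q (Suc j), y := q j))) \<phi>}" for j
      have cjf: "finite (cj j)" for j unfolding cj_def using c valid_fin q by auto
      have T: "T j \<in> E (cj j)" for j
      proof -
        have g1: "g (Suc j) = cl (q (Suc j))" and g2: "g j = cl (q j)" using q by auto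
        have v1: "valid (q (Suc j))" and v2: "valid (q j)" using q by auto
        have "sat (ext_prod E a M) ((\<lambda>i. cl (P i))(x := cl (q (Suc j)), y := cl (q j))) \<phi>"
          using gs[rule_format, of j] unfolding g1 g2 .
        then show ?thesis unfolding T_def cj_def upd using IHq[OF v1 v2] by simp
      qed
      define An where "An n = (case n of 0 \<Rightarrow> c | Suc j \<Rightarrow> cj j)" for n
      define Xn where "Xn n = (case n of 0 \<Rightarrow> ?W | Suc j \<Rightarrow> T j)" for n
      have "\<forall>n. finite (An n) \<and> Xn n \<in> E (An n)"
      proof
        fix n show "finite (An n) \<and> Xn n \<in> E (An n)"
        proof (cases n)
          case 0
          then have e1: "An n = c" and e2: "Xn n = ?W" by (simp_all add: An_def Xn_def)
          show ?thesis using c(1) W by (simp only: e1 e2 simp_thms)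
        next
          case (Suc j)
          then have e1: "An n = cj j" and e2: "Xn n = T j" by (simp_all add: An_def Xn_def)
          show ?thesis using cjf[of j] T[of j] by (simp only: e1 e2 simp_thms)
        qed
      qed
      then obtain h where h: "\<forall>n. h |` An n \<in> Xn n"
        using wf unfolding E_wellfounded_def by blast
      have h0: "h |` c \<in> ?W" using h[rule_format, of 0] by (simp add: An_def Xn_def)
      have hj: "h |` cj j \<in> T j" for j using h[rule_format, of "Suc j"] by (simp add: An_def Xn_def)
      define H where "H j = snd (q j) (h |` fst (q j))" for j
      have ha: "h |` c |` a = h |` a" using c(2) by (simp add: Int_absorb1)
      have Hu: "H j \<in> univ (M (h |` a))" and Hs: "sat (M (h |` a)) ((vl (h |` c) P)(x := H (Suc j), y := H j)) \<phi>" for j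
      proof -
        let ?t = "h |` cj j"
        have t: "?t \<in> seqs (cj j)" and ts: "sat (M (?t |` a)) (vl ?t (P(x := q (Suc j), y := q j))) \<phi>"
          using hj[of j] unfolding T_def by auto
        have sub: "fst (q j) \<subseteq> cj j" "fst (q (Suc j)) \<subseteq> cj j" "a \<subseteq> cj j" "c \<subseteq> cj j"
          unfolding cj_def using c by auto
        have ta: "?t |` a = h |` a" using sub(3) by (simp add: Int_absorb1)
        have t1: "?t |` fst (q j) = h |` fst (q j)" using sub(1) by (simp add: Int_absorb1)
        have t2: "?t |` fst (q (Suc j)) = h |` fst (q (Suc j))" using sub(2) by (simp add: Int_absorb1)
        have "snd (q j) (?t |` fst (q j)) \<in> univ (M (?t |` a))" by (rule valid_in[OF _ t sub(1)]) (use q in blast)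
        then show "H j \<in> univ (M (h |` a))" unfolding H_def using t1 ta by simp
        have "vl ?t (P(x := q (Suc j), y := q j)) = (vl ?t P)(x := H (Suc j), y := H j)"
          unfolding H_def using t1 t2 by (simp add: vl_upd del: restrict_restrict)
        then have s1: "sat (M (h |` a)) ((vl ?t P)(x := H (Suc j), y := H j)) \<phi>" using ts ta by simp
        have "\<forall>i\<in>D. vl ?t P i = vl (h |` c) P i"
        proof
          fix i assume i: "i \<in> D"
          have "fst (P i) \<subseteq> c" using P i by blast
          then show "vl ?t P i = vl (h |` c) P i"
            using sub(4) vl_restr[of P i c h] vl_restr[of P i "cj j" h] by auto
        qed
        from sat_upd2_cong[OF fvxy this, of "M (h |` a)" "H (Suc j)" "H j"]
        show "sat (M (h |` a)) ((vl (h |` c) P)(x := H (Suc j), y := H j)) \<phi>"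
          using s1 by simp
      qed
      have "\<exists>H. (\<forall>j. H j \<in> univ (M (h |` c |` a))) \<and> (\<forall>j. sat (M (h |` c |` a)) ((vl (h |` c) P)(x := H (Suc j), y := H j)) \<phi>)"
        by (rule exI[of _ H]) (simp only: ha Hu Hs simp_thms)
      then have "\<not> sat (M (h |` c |` a)) (vl (h |` c) P) (QWF x y \<phi>)"
        by (simp only: sat.simps not_not)
      moreover have "sat (M (h |` c |` a)) (vl (h |` c) P) (QWF x y \<phi>)"
        using h0 by (simp only: mem_Collect_eq)
      ultimately show False by (rule notE)
    qed
  qed
qed


lemma los_of_wf: "E_wellfounded E \<Longrightarrow> los E a M"
  unfolding los_def
proof (intro allI impI, elim conjE)
  fix \<phi> :: "('f, 'r, 'k) fm" and ps
  assume wf: "E_wellfounded E" and w: "wff \<phi>" and fvp: "fv \<phi> \<subseteq> {..<length ps}"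
    and ps: "\<forall>p\<in>set ps. valid p"
  let ?c = "a \<union> \<Union> (set (map fst ps))"
  have c: "finite ?c" using fa ps valid_fin by auto
  have P: "\<forall>i\<in>{..<length ps}. valid (ps ! i) \<and> fst (ps ! i) \<subseteq> ?c"
    using ps by auto
  have "sat (ext_prod E a M) (\<lambda>i. cl (ps ! i)) \<phi> \<longleftrightarrow>
      {s \<in> seqs ?c. sat (M (s |` a)) (vl s (\<lambda>i. ps ! i)) \<phi>} \<in> E ?c"
    by (rule main[OF wf w fvp c _ P]) auto
  moreover have "\<And>s. vl s (\<lambda>i. ps ! i) = (\<lambda>i. snd (ps ! i) (s |` fst (ps ! i)))"
    by (rule HOL.ext) (simp add: vl_def)
  ultimately show "sat (ext_prod E a M) (\<lambda>i. cl (ps ! i)) \<phi> \<longleftrightarrow>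
      {s \<in> seqs ?c. sat (M (s |` a)) (\<lambda>i. snd (ps ! i) (s |` fst (ps ! i))) \<phi>} \<in> E ?c"
    by simp
qed

end

context ectx
begin

lemma not_wf_not_los:
  assumes nwf: "\<not> E_wellfounded E"
  shows "\<exists>a (M :: ('l \<rightharpoonup> 'k) \<Rightarrow> (nat, nat, nat \<times> ('l \<rightharpoonup> 'k)) struct).
     finite a \<and> (\<forall>s\<in>seqs a. is_struct (M s)) \<and> \<not> los E a M"
proof -
  obtain A :: "nat \<Rightarrow> 'l set" and X where AX: "\<forall>n. finite (A n) \<and> X n \<in> E (A n)"
    and nh: "\<not> (\<exists>h. dom h = (\<Union>n. A n) \<and> (\<forall>n. h |` A n \<in> X n))"
    using nwf unfolding E_wellfounded_def by blast
  define B where "B n = (\<Union>i\<in>{..n}. A i)" for n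
  have Bf: "finite (B n)" for n unfolding B_def using AX by auto
  have AB: "i \<le> n \<Longrightarrow> A i \<subseteq> B n" for i n unfolding B_def by auto
  have Bmono: "m \<le> n \<Longrightarrow> B m \<subseteq> B n" for m n unfolding B_def by (auto intro: le_trans)
  define Y where "Y n = {s \<in> seqs (B n). \<forall>i\<le>n. s |` A i \<in> X i}" for n
  have Y: "Y n \<in> E (B n)" for n
  proof -
    have each: "\<forall>i\<in>{..n}. {s \<in> seqs (B n). s |` A i \<in> X i} \<in> E (B n)"
    proof
      fix i assume i: "i \<in> {..n}"
      have "X i \<subseteq> seqs (A i)" using E_sub AX by blast
      moreover have "X i \<in> E (A i)" using AX by blast
      ultimately show "{s \<in> seqs (B n). s |` A i \<in> X i} \<in> E (B n)"
        using coh_iff[OF Bf AB] i by auto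
    qed
    have "seqs (B n) \<inter> (\<Inter>i\<in>{..n}. {s \<in> seqs (B n). s |` A i \<in> X i}) \<in> E (B n)"
      by (rule E_Inter_fin[OF Bf _ each]) simp
    moreover have "seqs (B n) \<inter> (\<Inter>i\<in>{..n}. {s \<in> seqs (B n). s |` A i \<in> X i}) = Y n"
      unfolding Y_def by auto
    ultimately show ?thesis by simp
  qed
  have Yr: "s \<in> Y (Suc m) \<Longrightarrow> s |` B m \<in> Y m" for s m
  proof -
    assume s: "s \<in> Y (Suc m)"
    have "B m \<subseteq> B (Suc m)" by (rule Bmono) simp
    then have "s |` B m \<in> seqs (B m)" using s unfolding Y_def by (auto intro: seqs_restrict)
    moreover have "\<forall>i\<le>m. s |` B m |` A i \<in> X i"
    proof (intro allI impI)
      fix i assume i: "i \<le> m"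
      have "s |` B m |` A i = s |` A i" using AB[OF i] by (simp add: Int_absorb1)
      then show "s |` B m |` A i \<in> X i" using s i unfolding Y_def by auto
    qed
    ultimately show ?thesis unfolding Y_def by blast
  qed
  obtain s0 where s0: "s0 \<in> Y 0" using E_nonempty[OF Bf Y] by blast
  define U where "U = {(n, s) | n s. s \<in> Y n}"
  define R where "R = (\<lambda>(r::nat) (xs :: (nat \<times> ('l \<rightharpoonup> 'k)) list).
     \<exists>m t n s. xs = [(m, t), (n, s)] \<and> m = Suc n \<and> t \<in> Y m \<and> s \<in> Y n \<and> t |` B n = s)"
  define M0 where "M0 = (Struct U (\<lambda>(f::nat) xs. (0, s0)) R :: (nat, nat, nat \<times> ('l \<rightharpoonup> 'k)) struct)"
  define M where "M = (\<lambda>s::'l \<rightharpoonup> 'k. M0)"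
  have U0: "(0, s0) \<in> U" unfolding U_def using s0 by blast
  have stM: "\<forall>s\<in>seqs {}. is_struct (M s)"
    unfolding M_def M0_def is_struct_def using U0 by auto
  show ?thesis
  proof (intro exI conjI)
    show "finite ({} :: 'l set)" by simp
    show "\<forall>s\<in>seqs {}. is_struct (M s)" by (rule stM)
    show "\<not> los E {} M"
    proof
      assume L: "los E {} M"
      have Rf: "R r [(m, t), (n, q)] \<longleftrightarrow> m = Suc n \<and> t \<in> Y m \<and> q \<in> Y n \<and> t |` B n = q" for r m t n q
        unfolding R_def by simp
      have Ysq: "q \<in> Y n \<Longrightarrow> q \<in> seqs (B n)" for q n unfolding Y_def by blast
      have wfM0: "\<not> (\<exists>g. (\<forall>j. g j \<in> U) \<and> (\<forall>j. R 0 [g (Suc j), g j]))"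
      proof
        assume "\<exists>g. (\<forall>j. g j \<in> U) \<and> (\<forall>j. R 0 [g (Suc j), g j])"
        then obtain g where gR: "\<forall>j. R 0 [g (Suc j), g j]" by blast
        define n0 where "n0 = fst (g 0)"
        define sq where "sq j = snd (g j)" for j
        have gR': "fst (g (Suc j)) = Suc (fst (g j)) \<and> sq (Suc j) \<in> Y (fst (g (Suc j))) \<and> sq j \<in> Y (fst (g j))
            \<and> sq (Suc j) |` B (fst (g j)) = sq j" for j
        proof -
          have "R 0 [(fst (g (Suc j)), snd (g (Suc j))), (fst (g j), snd (g j))]" using gR by simp
          then show ?thesis unfolding Rf sq_def by blast
        qed
        have fg: "fst (g j) = n0 + j" for j
        proof (induction j)
          case 0 then show ?case by (simp add: n0_def)
        next
          case (Suc j) then show ?case using gR'[of j] by simp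
        qed
        have sqY: "sq j \<in> Y (n0 + j)" for j using gR'[of j] fg[of j] by simp
        have chain: "k \<le> j \<Longrightarrow> sq j |` B (n0 + k) = sq k" for k j
        proof (induction j)
          case 0 then show ?case using restrict_self[OF Ysq[OF sqY[of 0]]] by simp
        next
          case (Suc j)
          show ?case
          proof (cases "k = Suc j")
            case True then show ?thesis using restrict_self[OF Ysq[OF sqY[of "Suc j"]]] by simp
          next
            case False
            then have kj: "k \<le> j" using Suc.prems by simp
            have sub: "B (n0 + k) \<subseteq> B (n0 + j)" using kj by (intro Bmono) simp
            have "sq (Suc j) |` B (n0 + k) = sq (Suc j) |` B (n0 + j) |` B (n0 + k)"
              using sub by (simp add: Int_absorb1)
            also have "\<dots> = sq j |` B (n0 + k)" using gR'[of j] fg[of j] by simp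
            also have "\<dots> = sq k" using Suc.IH[OF kj] .
            finally show ?thesis .
          qed
        qed
        define h where "h l = (if \<exists>j. l \<in> B (n0 + j) then sq (LEAST j. l \<in> B (n0 + j)) l else None)" for l
        have hB: "h |` B (n0 + j) = sq j" for j
        proof (rule HOL.ext)
          fix l
          show "(h |` B (n0 + j)) l = sq j l"
          proof (cases "l \<in> B (n0 + j)")
            case True
            define J where "J = (LEAST j. l \<in> B (n0 + j))"
            have J1: "l \<in> B (n0 + J)" unfolding J_def using True by (rule LeastI)
            have J2: "J \<le> j" unfolding J_def using True by (rule Least_le)
            have "h l = sq J l" unfolding h_def J_def using True by auto
            also have "\<dots> = (sq j |` B (n0 + J)) l" using chain[OF J2] by simp
            also have "\<dots> = sq j l" using J1 by simp
            finally show ?thesis using True by simp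
          next
            case False
            have "dom (sq j) = B (n0 + j)" using Ysq[OF sqY[of j]] unfolding seqs_def by simp
            then have "sq j l = None" using False by blast
            then show ?thesis using False by simp
          qed
        qed
        have domh: "dom h = (\<Union>n. A n)"
        proof
          show "dom h \<subseteq> (\<Union>n. A n)"
          proof
            fix l assume "l \<in> dom h"
            then have "\<exists>j. l \<in> B (n0 + j)" unfolding h_def by (auto split: if_splits)
            then show "l \<in> (\<Union>n. A n)" unfolding B_def by blast
          qed
          show "(\<Union>n. A n) \<subseteq> dom h"
          proof
            fix l assume "l \<in> (\<Union>n. A n)"
            then obtain n where l: "l \<in> A n" by blast
            then have lB: "l \<in> B (n0 + n)" using AB[of n "n0 + n"] by auto
            have "dom (sq n) = B (n0 + n)" using Ysq[OF sqY[of n]] unfolding seqs_def by simp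
            then have "sq n l \<noteq> None" using lB by blast
            moreover have "h l = sq n l" using hB[of n] lB by (metis restrict_in)
            ultimately show "l \<in> dom h" by (simp add: domIff)
          qed
        qed
        have "\<forall>n. h |` A n \<in> X n"
        proof
          fix n
          have "h |` A n = h |` B (n0 + n) |` A n" using AB[of n "n0 + n"] by (simp add: Int_absorb1)
          also have "\<dots> = sq n |` A n" using hB by simp
          finally show "h |` A n \<in> X n" using sqY[of n] unfolding Y_def by auto
        qed
        then show False using nh domh by blast
      qed
      define \<phi>' where "\<phi>' = (Rel 0 [Var 0, Var 1] :: (nat, nat, 'k) fm)"
      define \<phi> where "\<phi> = (QWF 0 1 \<phi>' :: (nat, nat, 'k) fm)"
      have satM0: "sat M0 v \<phi>" for v
        using wfM0 unfolding \<phi>_def \<phi>'_def M0_def by simp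
      define p where "p j = (B j, \<lambda>s. if s \<in> Y j then (j, s) else (0, s0))" for j
      have pv: "valid_rep E {} M (p j)" for j
        unfolding valid_rep_def p_def M_def M0_def using Bf U0 by (auto simp: U_def)
      let ?v = "\<lambda>i. cls E {} M (([] :: ('l set \<times> (('l \<rightharpoonup> 'k) \<Rightarrow> nat \<times> ('l \<rightharpoonup> 'k))) list) ! i)"
      have Li: "\<And>(\<psi> :: (nat, nat, 'k) fm) ps. wff \<psi> \<Longrightarrow> fv \<psi> \<subseteq> {..<length ps} \<Longrightarrow> (\<forall>p\<in>set ps. valid_rep E {} M p) \<Longrightarrow>
        (sat (ext_prod E {} M) (\<lambda>i. cls E {} M (ps ! i)) \<psi> \<longleftrightarrow>
         {s \<in> seqs ({} \<union> \<Union> (set (map fst ps))). sat (M (s |` {})) (\<lambda>i. snd (ps ! i) (s |` fst (ps ! i))) \<psi>}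
           \<in> E ({} \<union> \<Union> (set (map fst ps))))"
        using L unfolding los_def by blast
      let ?e = "[] :: ('l set \<times> (('l \<rightharpoonup> 'k) \<Rightarrow> nat \<times> ('l \<rightharpoonup> 'k))) list"
      have prodsat: "sat (ext_prod E {} M) ?v \<phi>"
      proof -
        have "sat (ext_prod E {} M) ?v \<phi> \<longleftrightarrow>
            {s \<in> seqs ({} \<union> \<Union> (set (map fst ?e))). sat (M (s |` {})) (\<lambda>i. snd (?e ! i) (s |` fst (?e ! i))) \<phi>}
            \<in> E ({} \<union> \<Union> (set (map fst ?e)))"
          by (rule Li) (auto simp: \<phi>_def \<phi>'_def)
        moreover have "{s \<in> seqs ({} \<union> \<Union> (set (map fst ?e))). sat (M (s |` {})) (\<lambda>i. snd (?e ! i) (s |` fst (?e ! i))) \<phi>}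
           = seqs {}"
          using satM0 unfolding M_def by simp
        ultimately show ?thesis using E_top[of "{}"] by simp
      qed
      have step: "sat (ext_prod E {} M) (?v(0 := cls E {} M (p (Suc j)), 1 := cls E {} M (p j))) \<phi>'" for j
      proof -
        let ?ps = "[p (Suc j), p j]"
        have cu: "{} \<union> \<Union> (set (map fst ?ps)) = B (Suc j)"
          using Bmono[of j "Suc j"] by (auto simp: p_def)
        have "sat (ext_prod E {} M) (\<lambda>i. cls E {} M (?ps ! i)) \<phi>' \<longleftrightarrow>
            {s \<in> seqs ({} \<union> \<Union> (set (map fst ?ps))). sat (M (s |` {})) (\<lambda>i. snd (?ps ! i) (s |` fst (?ps ! i))) \<phi>'}
            \<in> E ({} \<union> \<Union> (set (map fst ?ps)))"
          by (rule Li) (use pv in \<open>auto simp: \<phi>'_def\<close>)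
        also have "\<dots> \<longleftrightarrow> {s \<in> seqs (B (Suc j)). R 0 [snd (p (Suc j)) (s |` B (Suc j)), snd (p j) (s |` B j)]} \<in> E (B (Suc j))"
          unfolding cu by (simp add: \<phi>'_def M_def M0_def p_def)
        also have "\<dots>"
        proof (rule E_up[OF Bf Y])
          show "Y (Suc j) \<subseteq> {s \<in> seqs (B (Suc j)). R 0 [snd (p (Suc j)) (s |` B (Suc j)), snd (p j) (s |` B j)]}"
          proof
            fix s assume s: "s \<in> Y (Suc j)"
            have ss: "s \<in> seqs (B (Suc j))" by (rule Ysq[OF s])
            have e1: "s |` B (Suc j) = s" by (rule restrict_self[OF ss])
            have s2: "s |` B j \<in> Y j" by (rule Yr[OF s])
            have "R 0 [(Suc j, s), (j, s |` B j)]" unfolding Rf using s s2 by simp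
            then show "s \<in> {s \<in> seqs (B (Suc j)). R 0 [snd (p (Suc j)) (s |` B (Suc j)), snd (p j) (s |` B j)]}"
              using ss s s2 e1 by (simp add: p_def)
          qed
        qed blast
        finally have "sat (ext_prod E {} M) (\<lambda>i. cls E {} M (?ps ! i)) \<phi>'" .
        moreover have "sat (ext_prod E {} M) (\<lambda>i. cls E {} M (?ps ! i)) \<phi>' =
            sat (ext_prod E {} M) (?v(0 := cls E {} M (p (Suc j)), 1 := cls E {} M (p j))) \<phi>'"
          by (rule sat_cong) (simp add: \<phi>'_def)
        ultimately show ?thesis by simp
      qed
      have "\<exists>g. (\<forall>j. g j \<in> univ (ext_prod E {} M)) \<and> (\<forall>j. sat (ext_prod E {} M) (?v(0 := g (Suc j), 1 := g j)) \<phi>')"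
      proof (intro exI conjI allI)
        fix j
        have "cls E {} M (p j) \<in> prod_univ E {} M"
          unfolding prod_univ_def using pv[of j] by blast
        then show "cls E {} M (p j) \<in> univ (ext_prod E {} M)"
          unfolding ext_prod_def by simp
        show "sat (ext_prod E {} M) (?v(0 := cls E {} M (p (Suc j)), 1 := cls E {} M (p j))) \<phi>'"
          by (rule step)
      qed
      then show False using prodsat unfolding \<phi>_def by simp
    qed
  qed
qed

end

lemma wf_los:
  assumes "extender_system E" "coherent E" "E_wellfounded E" "finite a" "\<forall>s\<in>seqs a. is_struct (M s)"
  shows "los E a M"
proof -
  interpret pctx E a M by unfold_locales (fact assms)+
  show ?thesis by (rule los_of_wf[OF assms(3)])
qed

theorem proposition5p3:
  fixes E :: "'l set \<Rightarrow> ('l \<rightharpoonup> 'k) set set"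
  assumes "extender_system E"
    and "coherent E"
  shows "(E_wellfounded E \<longrightarrow>
            (\<forall>a (M :: ('l \<rightharpoonup> 'k) \<Rightarrow> ('f, 'r, 'm) struct).
               finite a \<and> (\<forall>s\<in>seqs a. is_struct (M s)) \<longrightarrow> los E a M))
       \<and> (E_wellfounded E \<longleftrightarrow>
            (\<forall>a (M :: ('l \<rightharpoonup> 'k) \<Rightarrow> (nat, nat, nat \<times> ('l \<rightharpoonup> 'k)) struct).
               finite a \<and> (\<forall>s\<in>seqs a. is_struct (M s)) \<longrightarrow> los E a M))"
proof -
  interpret ectx E by unfold_locales (fact assms)+
  have 1: "E_wellfounded E \<longrightarrow>
            (\<forall>a (M :: ('l \<rightharpoonup> 'k) \<Rightarrow> ('f, 'r, 'm) struct).
               finite a \<and> (\<forall>s\<in>seqs a. is_struct (M s)) \<longrightarrow> los E a M)"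
    using wf_los[OF assms] by blast
  have 2: "E_wellfounded E \<longrightarrow>
            (\<forall>a (M :: ('l \<rightharpoonup> 'k) \<Rightarrow> (nat, nat, nat \<times> ('l \<rightharpoonup> 'k)) struct).
               finite a \<and> (\<forall>s\<in>seqs a. is_struct (M s)) \<longrightarrow> los E a M)"
    using wf_los[OF assms] by blast
  have 3: "(\<forall>a (M :: ('l \<rightharpoonup> 'k) \<Rightarrow> (nat, nat, nat \<times> ('l \<rightharpoonup> 'k)) struct).
               finite a \<and> (\<forall>s\<in>seqs a. is_struct (M s)) \<longrightarrow> los E a M) \<longrightarrow> E_wellfounded E"
    using not_wf_not_los by blast
  show ?thesis using 1 2 3 by blast
qed

end
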